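(* Let $\mathcal A=(a_{ij})$, $\mathcal B=(b_{ij})$ be symmetric $3\times3$ matrices (indices $0,1,2$), $\mathbf V(s,t)=(s^2,st,t^2)^T$, $\mathbf f(u)=(\mathcal A\mathbf V(u,1))\times(\mathcal B\mathbf V(u,1))$, and consider the symmetric QRT map $u_{n+1}=\frac{f^{(1)}(u_n)-u_{n-1}f^{(2)}(u_n)}{f^{(2)}(u_n)-u_{n-1}f^{(3)}(u_n)}$ with first integral $$J=\frac{\mathbf V(u_{n-1},1)^T\mathcal A\,\mathbf V(u_n,1)}{\mathbf V(u_{n-1},1)^T\mathcal B\,\mathbf V(u_n,1)}.$$ Write $u_n=p_n/q_n$ where $p_n,q_n$ satisfy $$p_{n+1}=\frac{q_{n-1}F^{(1)}_n-p_{n-1}F^{(2)}_n}{D_n},\qquad q_{n+1}=\frac{q_{n-1}F^{(2)}_n-p_{n-1}F^{(3)}_n}{D_n},$$ with $F^{(i)}_n=q_n^4f^{(i)}(p_n/q_n)$ and $D_n=\mathbf V(p_{n-1},q_{n-1})^T\mathcal B\,\mathbf V(p_n,q_n)$. Set $$a_1=a_{00}-Jb_{00},\ a_2=a_{01}-Jb_{01},\ a_3=a_{02}-Jb_{02},\ a_5=a_{12}-Jb_{12},\ a_6=a_{22}-Jb_{22},\ I=-a_{11}+Jb_{11},$$ $$\alpha=a_2a_5+a_3^2-a_1a_6+a_3I,\quad \beta=(a_1a_5-2a_2a_3)a_5+a_2^2a_6+(a_1a_6-a_3^2)I,\quad \gamma=4a_3+I,$$ and $A=-(\alpha^3+\alpha\beta\gamma+\beta^2)$,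 $B=(\beta^2-A)\alpha^2$, $C=A(A-\beta^2)$. Then $x_n=p_n$ and $x_n=q_n$ both satisfy $$x_{n+7}x_n=Ax_{n+6}x_{n+1}+Bx_{n+5}x_{n+2}+Cx_{n+4}x_{n+3}.$$
   Context: The superscripts in $f^{(i)},F^{(i)}_n$ denote the components of the vectors $\mathbf f$ and $\mathbf F_n$ (cross product of vectors in three dimensions). *)

theory Defs
  imports "HOL-Analysis.Analysis" "HOL-Analysis.Cross3"
begin

text \<open>Paper indices 0,1,2 of vectors/matrices correspond to the indices 1,2,3 of the
  type real^3 (so a_ij = A $ (i+1) $ (j+1), f^(k) = f $ k).\<close>

definition Vq :: "real \<Rightarrow> real \<Rightarrow> real^3" where
  "Vq s t = vector [s^2, s*t, t^2]"

definition fq :: "real^3^3 \<Rightarrow> real^3^3 \<Rightarrow> real \<Rightarrow> real^3" where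
  "fq A B u = cross3 (A *v Vq u 1) (B *v Vq u 1)"

definition Fq :: "real^3^3 \<Rightarrow> real^3^3 \<Rightarrow> real \<Rightarrow> real \<Rightarrow> real^3" where
  "Fq A B p q = (q^4) *\<^sub>R fq A B (p / q)"

definition bq :: "real^3^3 \<Rightarrow> real \<Rightarrow> real \<Rightarrow> real \<Rightarrow> real \<Rightarrow> real" where
  "bq M s t s' t' = Vq s t \<bullet> (M *v Vq s' t')"

definition qa1 :: "real^3^3 \<Rightarrow> real^3^3 \<Rightarrow> real \<Rightarrow> real" where
  "qa1 A B J = A$1$1 - J * B$1$1"
definition qa2 :: "real^3^3 \<Rightarrow> real^3^3 \<Rightarrow> real \<Rightarrow> real" where
  "qa2 A B J = A$1$2 - J * B$1$2"
definition qa3 :: "real^3^3 \<Rightarrow> real^3^3 \<Rightarrow> real \<Rightarrow> real" where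
  "qa3 A B J = A$1$3 - J * B$1$3"
definition qa5 :: "real^3^3 \<Rightarrow> real^3^3 \<Rightarrow> real \<Rightarrow> real" where
  "qa5 A B J = A$2$3 - J * B$2$3"
definition qa6 :: "real^3^3 \<Rightarrow> real^3^3 \<Rightarrow> real \<Rightarrow> real" where
  "qa6 A B J = A$3$3 - J * B$3$3"
definition qI :: "real^3^3 \<Rightarrow> real^3^3 \<Rightarrow> real \<Rightarrow> real" where
  "qI A B J = - A$2$2 + J * B$2$2"

definition qalpha :: "real^3^3 \<Rightarrow> real^3^3 \<Rightarrow> real \<Rightarrow> real" where
  "qalpha A B J = qa2 A B J * qa5 A B J + (qa3 A B J)^2 - qa1 A B J * qa6 A B J
                   + qa3 A B J * qI A B J"
definition qbeta :: "real^3^3 \<Rightarrow> real^3^3 \<Rightarrow> real \<Rightarrow> real" where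
  "qbeta A B J = (qa1 A B J * qa5 A B J - 2 * qa2 A B J * qa3 A B J) * qa5 A B J
                  + (qa2 A B J)^2 * qa6 A B J
                  + (qa1 A B J * qa6 A B J - (qa3 A B J)^2) * qI A B J"
definition qgamma :: "real^3^3 \<Rightarrow> real^3^3 \<Rightarrow> real \<Rightarrow> real" where
  "qgamma A B J = 4 * qa3 A B J + qI A B J"

definition cA :: "real^3^3 \<Rightarrow> real^3^3 \<Rightarrow> real \<Rightarrow> real" where
  "cA A B J = - ((qalpha A B J)^3 + qalpha A B J * qbeta A B J * qgamma A B J + (qbeta A B J)^2)"
definition cB :: "real^3^3 \<Rightarrow> real^3^3 \<Rightarrow> real \<Rightarrow> real" where
  "cB A B J = ((qbeta A B J)^2 - cA A B J) * (qalpha A B J)^2"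
definition cC :: "real^3^3 \<Rightarrow> real^3^3 \<Rightarrow> real \<Rightarrow> real" where
  "cC A B J = cA A B J * (cA A B J - (qbeta A B J)^2)"

end

theory Submission
  imports Defs
begin


lemma Vq_comp: "Vq s t $ 1 = s^2" "Vq s t $ 2 = s*t" "Vq s t $ 3 = t^2"
  by (simp_all add: Vq_def)

lemma mv_comp: "((M::real^3^3) *v v) $ i = M$i$1 * v$1 + M$i$2 * v$2 + M$i$3 * v$3"
  by (simp add: matrix_vector_mult_def sum_3)

lemma bq_exp: "bq M sa tb xx yy =
   sa^2 * (M$1$1*xx^2 + M$1$2*(xx*yy) + M$1$3*yy^2) +
   (sa*tb) * (M$2$1*xx^2 + M$2$2*(xx*yy) + M$2$3*yy^2) +
   tb^2 * (M$3$1*xx^2 + M$3$2*(xx*yy) + M$3$3*yy^2)"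
  by (simp add: bq_def inner_vec_def sum_3 mv_comp Vq_comp)

lemma Fq_exp1:
  assumes "q \<noteq> 0"
  shows "Fq A B p q $ 1 =
      (A$2$1*p^2 + A$2$2*(p*q) + A$2$3*q^2) * (B$3$1*p^2 + B$3$2*(p*q) + B$3$3*q^2)
    - (A$3$1*p^2 + A$3$2*(p*q) + A$3$3*q^2) * (B$2$1*p^2 + B$2$2*(p*q) + B$2$3*q^2)"
  using assms by (simp add: Fq_def fq_def cross3_def mv_comp Vq_comp field_simps power_divide; algebra)

lemma Fq_exp2:
  assumes "q \<noteq> 0"
  shows "Fq A B p q $ 2 =
      (A$3$1*p^2 + A$3$2*(p*q) + A$3$3*q^2) * (B$1$1*p^2 + B$1$2*(p*q) + B$1$3*q^2)
    - (A$1$1*p^2 + A$1$2*(p*q) + A$1$3*q^2) * (B$3$1*p^2 + B$3$2*(p*q) + B$3$3*q^2)"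
  using assms by (simp add: Fq_def fq_def cross3_def mv_comp Vq_comp field_simps power_divide; algebra)

lemma Fq_exp3:
  assumes "q \<noteq> 0"
  shows "Fq A B p q $ 3 =
      (A$1$1*p^2 + A$1$2*(p*q) + A$1$3*q^2) * (B$2$1*p^2 + B$2$2*(p*q) + B$2$3*q^2)
    - (A$2$1*p^2 + A$2$2*(p*q) + A$2$3*q^2) * (B$1$1*p^2 + B$1$2*(p*q) + B$1$3*q^2)"
  using assms by (simp add: Fq_def fq_def cross3_def mv_comp Vq_comp field_simps power_divide; algebra)

lemmas Fq_exp = Fq_exp1 Fq_exp2 Fq_exp3

lemma core:
  fixes x y av1 av2 av3 bv1 bv2 bv3 J D P Q :: real
  assumes D: "D = x^2*bv1 + x*y*bv2 + y^2*bv3" and E: "x^2*av1 + x*y*av2 + y^2*av3 = J*D"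
    and Dnz: "D \<noteq> 0"
    and P: "P = (y*(av2*bv3 - av3*bv2) - x*(av3*bv1 - av1*bv3))/D"
    and Q: "Q = (y*(av3*bv1 - av1*bv3) - x*(av1*bv2 - av2*bv1))/D"
  shows "Q*y = -(av1 - J*bv1)" "x*Q + y*P = av2 - J*bv2" "P*x = -(av3 - J*bv3)"
proof -
  have "D*(Q*y) = D*(-(av1 - J*bv1))"
    using Dnz unfolding Q by (simp add: field_simps, insert D E, algebra)
  thus "Q*y = -(av1 - J*bv1)" using Dnz by simp
  have "D*(x*Q + y*P) = D*(av2 - J*bv2)"
    using Dnz unfolding Q P by (simp add: field_simps, insert D E, algebra)
  thus "x*Q + y*P = av2 - J*bv2" using Dnz by simp
  have "D*(P*x) = D*(-(av3 - J*bv3))"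
    using Dnz unfolding P by (simp add: field_simps, insert D E, algebra)
  thus "P*x = -(av3 - J*bv3)" using Dnz by simp
qed

definition Q1f :: "real \<Rightarrow> real \<Rightarrow> real \<Rightarrow> real \<Rightarrow> real \<Rightarrow> real" where
  "Q1f a1 a2 a3 x y = a1*x^2 + a2*x*y + a3*y^2"
definition Q2f :: "real \<Rightarrow> real \<Rightarrow> real \<Rightarrow> real \<Rightarrow> real \<Rightarrow> real" where
  "Q2f a2 b a5 x y = a2*x^2 - b*x*y + a5*y^2"
definition Q3f :: "real \<Rightarrow> real \<Rightarrow> real \<Rightarrow> real \<Rightarrow> real \<Rightarrow> real" where
  "Q3f a3 a5 a6 x y = a3*x^2 + a5*x*y + a6*y^2"

definition vieta :: "real \<Rightarrow> real \<Rightarrow> real \<Rightarrow> real \<Rightarrow> real \<Rightarrow> real \<Rightarrow> (nat \<Rightarrow> real) \<Rightarrow> (nat \<Rightarrow> real) \<Rightarrow> nat \<Rightarrow> bool" where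
  "vieta a1 a2 a3 b a5 a6 p q k \<longleftrightarrow>
     q (k+1) * q (k-1) = - Q1f a1 a2 a3 (p k) (q k) \<and>
     p (k-1) * q (k+1) + q (k-1) * p (k+1) = Q2f a2 b a5 (p k) (q k) \<and>
     p (k+1) * p (k-1) = - Q3f a3 a5 a6 (p k) (q k)"

definition alf :: "real \<Rightarrow> real \<Rightarrow> real \<Rightarrow> real \<Rightarrow> real \<Rightarrow> real \<Rightarrow> real" where
  "alf a1 a2 a3 b a5 a6 = a2*a5 + a3^2 - a1*a6 + a3*b"
definition bef :: "real \<Rightarrow> real \<Rightarrow> real \<Rightarrow> real \<Rightarrow> real \<Rightarrow> real \<Rightarrow> real" where
  "bef a1 a2 a3 b a5 a6 = (a1*a5 - 2*a2*a3)*a5 + a2^2*a6 + (a1*a6 - a3^2)*b"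
definition gaf :: "real \<Rightarrow> real \<Rightarrow> real \<Rightarrow> real \<Rightarrow> real \<Rightarrow> real \<Rightarrow> real" where
  "gaf a1 a2 a3 b a5 a6 = 4*a3 + b"
definition CAf :: "real \<Rightarrow> real \<Rightarrow> real \<Rightarrow> real" where
  "CAf al be ga = - (al^3 + al*be*ga + be^2)"
definition CBf :: "real \<Rightarrow> real \<Rightarrow> real \<Rightarrow> real" where
  "CBf al be ga = (be^2 - CAf al be ga) * al^2"
definition CCf :: "real \<Rightarrow> real \<Rightarrow> real \<Rightarrow> real" where
  "CCf al be ga = CAf al be ga * (CAf al be ga - be^2)"

definition Sf :: "real \<Rightarrow> real \<Rightarrow> real \<Rightarrow> (nat \<Rightarrow> real) \<Rightarrow> (nat \<Rightarrow> real) \<Rightarrow> real" where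
  "Sf kA kB kC x y = (x 7*y 0 + y 7*x 0) - kA*(x 6*y 1 + y 6*x 1) - kB*(x 5*y 2 + y 5*x 2)
      - kC*(x 4*y 3 + y 4*x 3)"

lemma NL:
  fixes u a1 a2 a3 b a5 a6 :: real and p q :: "nat \<Rightarrow> real"
  assumes h3: "p 3 = 0" "q 3 = 1" and h4: "p 4 = u" "q 4 = 1"
    and V: "\<And>k. 1 \<le> k \<Longrightarrow> k \<le> 6 \<Longrightarrow> vieta a1 a2 a3 b a5 a6 p q k"
    and nz: "q 2 \<noteq> 0" "q 5 \<noteq> 0"
  shows "Sf (CAf (alf a1 a2 a3 b a5 a6) (bef a1 a2 a3 b a5 a6) (gaf a1 a2 a3 b a5 a6))
            (CBf (alf a1 a2 a3 b a5 a6) (bef a1 a2 a3 b a5 a6) (gaf a1 a2 a3 b a5 a6))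
            (CCf (alf a1 a2 a3 b a5 a6) (bef a1 a2 a3 b a5 a6) (gaf a1 a2 a3 b a5 a6)) p p = 0
       \<and> Sf (CAf (alf a1 a2 a3 b a5 a6) (bef a1 a2 a3 b a5 a6) (gaf a1 a2 a3 b a5 a6))
            (CBf (alf a1 a2 a3 b a5 a6) (bef a1 a2 a3 b a5 a6) (gaf a1 a2 a3 b a5 a6))
            (CCf (alf a1 a2 a3 b a5 a6) (bef a1 a2 a3 b a5 a6) (gaf a1 a2 a3 b a5 a6)) p q = 0
       \<and> Sf (CAf (alf a1 a2 a3 b a5 a6) (bef a1 a2 a3 b a5 a6) (gaf a1 a2 a3 b a5 a6))
            (CBf (alf a1 a2 a3 b a5 a6) (bef a1 a2 a3 b a5 a6) (gaf a1 a2 a3 b a5 a6))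
            (CCf (alf a1 a2 a3 b a5 a6) (bef a1 a2 a3 b a5 a6) (gaf a1 a2 a3 b a5 a6)) q q = 0"
proof -
  have v1: "vieta a1 a2 a3 b a5 a6 p q 1" and v2: "vieta a1 a2 a3 b a5 a6 p q 2"
   and v3: "vieta a1 a2 a3 b a5 a6 p q 3" and v4: "vieta a1 a2 a3 b a5 a6 p q 4"
   and v5: "vieta a1 a2 a3 b a5 a6 p q 5" and v6: "vieta a1 a2 a3 b a5 a6 p q 6"
    using V by auto
  note vd = vieta_def Q1f_def Q2f_def Q3f_def
  have a6: "a6 = - a3*u^2 - a5*u" using v4 h3 h4 unfolding vd by simp (* p5*p3 = -Q3 *)

  have q2: "q 2 = (- (a3))"
  proof -
    have e: "q 4 * q 2 = - Q1f a1 a2 a3 (p 3) (q 3)" using v3 by (simp add: vieta_def eval_nat_numeral)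
    have s1: "q 2 = - a3" using e h3 h4  by (simp add: algebra_simps Q1f_def Q2f_def)
    have s2: "- a3 = (- (a3))" by ((unfold h3 Q1f_def Q2f_def)?, (algebra | simp))
    show ?thesis by (rule trans[OF s1 s2])
  qed
  have p2: "p 2 = (u*a3 + a5)"
  proof -
    have e: "p 2 * q 4 + q 2 * p 4 = Q2f a2 b a5 (p 3) (q 3)" using v3 by (simp add: vieta_def eval_nat_numeral)
    have s1: "p 2 = a5 + a3*u" using e h3 h4 q2 by (simp add: algebra_simps Q1f_def Q2f_def)
    have s2: "a5 + a3*u = (u*a3 + a5)" by ((unfold h3 Q1f_def Q2f_def)?, (algebra | simp))
    show ?thesis by (rule trans[OF s1 s2])
  qed
  have q5: "q 5 = (- (u^2*a1) - (u*a2) - (a3))"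
  proof -
    have e: "q 5 * q 3 = - Q1f a1 a2 a3 (p 4) (q 4)" using v4 by (simp add: vieta_def eval_nat_numeral)
    have s1: "q 5 = - (a1*u^2 + a2*u + a3)" using e h3 h4  by (simp add: algebra_simps Q1f_def Q2f_def)
    have s2: "- (a1*u^2 + a2*u + a3) = (- (u^2*a1) - (u*a2) - (a3))" by ((unfold h4 Q1f_def Q2f_def)?, (algebra | simp))
    show ?thesis by (rule trans[OF s1 s2])
  qed
  have p5: "p 5 = (u^2*a2 - (u*b) + a5)"
  proof -
    have e: "p 3 * q 5 + q 3 * p 5 = Q2f a2 b a5 (p 4) (q 4)" using v4 by (simp add: vieta_def eval_nat_numeral)
    have s1: "p 5 = a2*u^2 - b*u + a5" using e h3 h4  by (simp add: algebra_simps Q1f_def Q2f_def)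
    have s2: "a2*u^2 - b*u + a5 = (u^2*a2 - (u*b) + a5)" by ((unfold h4 Q1f_def Q2f_def)?, (algebra | simp))
    show ?thesis by (rule trans[OF s1 s2])
  qed
  have q1: "q 1 = (- (u^2*a1*a3^2) - (2*u*a1*a3*a5) + u*a2*a3^2 - (a1*a5^2) + a2*a3*a5 - (a3^3))"
  proof -
    have e: "q 3 * q 1 = - Q1f a1 a2 a3 (p 2) (q 2)" using v2 by (simp add: vieta_def eval_nat_numeral)
    have s1: "q 1 = - Q1f a1 a2 a3 (p 2) (q 2)" using e h3 h4  by (simp add: algebra_simps Q1f_def Q2f_def)
    have s2: "- Q1f a1 a2 a3 (p 2) (q 2) = (- (u^2*a1*a3^2) - (2*u*a1*a3*a5) + u*a2*a3^2 - (a1*a5^2) + a2*a3*a5 - (a3^3))" by ((unfold p2 q2 Q1f_def Q2f_def)?, (algebra | simp))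
    show ?thesis by (rule trans[OF s1 s2])
  qed
  have p1: "p 1 = (u^2*a2*a3^2 + 2*u*a2*a3*a5 + u*a3^2*b + a2*a5^2 + a3^2*a5 + a3*b*a5)"
  proof -
    have e: "p 1 * q 3 + q 1 * p 3 = Q2f a2 b a5 (p 2) (q 2)" using v2 by (simp add: vieta_def eval_nat_numeral)
    have s1: "p 1 = Q2f a2 b a5 (p 2) (q 2)" using e h3 h4  by (simp add: algebra_simps Q1f_def Q2f_def)
    have s2: "Q2f a2 b a5 (p 2) (q 2) = (u^2*a2*a3^2 + 2*u*a2*a3*a5 + u*a3^2*b + a2*a5^2 + a3^2*a5 + a3*b*a5)" by ((unfold p2 q2 Q1f_def Q2f_def)?, (algebra | simp))
    show ?thesis by (rule trans[OF s1 s2])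
  qed
  have q6: "q 6 = (- (u^4*a1^2*a3) - (2*u^3*a1*a2*a3) + u^3*a1*a2*b + u^3*a2^3 - (u^2*a1*a2*a5) - (2*u^2*a1*a3^2) - (u^2*a1*b^2) - (u^2*a2^2*b) + 2*u*a1*b*a5 + u*a2^2*a5 - (2*u*a2*a3^2) - (u*a2*a3*b) - (a1*a5^2) + a2*a3*a5 - (a3^3))"
  proof -
    have e: "q 6 * q 4 = - Q1f a1 a2 a3 (p 5) (q 5)" using v5 by (simp add: vieta_def eval_nat_numeral)
    have s1: "q 6 = - Q1f a1 a2 a3 (p 5) (q 5)" using e h3 h4  by (simp add: algebra_simps Q1f_def Q2f_def)
    have s2: "- Q1f a1 a2 a3 (p 5) (q 5) = (- (u^4*a1^2*a3) - (2*u^3*a1*a2*a3) + u^3*a1*a2*b + u^3*a2^3 - (u^2*a1*a2*a5) - (2*u^2*a1*a3^2) - (u^2*a1*b^2) - (u^2*a2^2*b) + 2*u*a1*b*a5 + u*a2^2*a5 - (2*u*a2*a3^2) - (u*a2*a3*b) - (a1*a5^2) + a2*a3*a5 - (a3^3))" by ((unfold p5 q5 Q1f_def Q2f_def)?, (algebra | simp))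
    show ?thesis by (rule trans[OF s1 s2])
  qed
  have p6: "p 6 = (u^5*a1^2*a3 + u^4*a1^2*a5 + 2*u^4*a1*a2*a3 + 3*u^3*a1*a2*a5 + 2*u^3*a1*a3^2 + 2*u^2*a1*a3*a5 - (u^2*a1*b*a5) + 2*u^2*a2^2*a5 + 2*u^2*a2*a3^2 + 2*u^2*a2*a3*b + u*a1*a5^2 + u*a2*a3*a5 - (u*a2*b*a5) + u*a3^3 - (u*a3*b^2) + a2*a5^2 + a3^2*a5 + a3*b*a5)"
  proof -
    have e: "p 4 * q 6 + q 4 * p 6 = Q2f a2 b a5 (p 5) (q 5)" using v5 by (simp add: vieta_def eval_nat_numeral)
    have s1: "p 6 = Q2f a2 b a5 (p 5) (q 5) - u * q 6" using e h3 h4  by (simp add: algebra_simps Q1f_def Q2f_def)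
    have s2: "Q2f a2 b a5 (p 5) (q 5) - u * q 6 = (u^5*a1^2*a3 + u^4*a1^2*a5 + 2*u^4*a1*a2*a3 + 3*u^3*a1*a2*a5 + 2*u^3*a1*a3^2 + 2*u^2*a1*a3*a5 - (u^2*a1*b*a5) + 2*u^2*a2^2*a5 + 2*u^2*a2*a3^2 + 2*u^2*a2*a3*b + u*a1*a5^2 + u*a2*a3*a5 - (u*a2*b*a5) + u*a3^3 - (u*a3*b^2) + a2*a5^2 + a3^2*a5 + a3*b*a5)" by ((unfold p5 q5 q6 Q1f_def Q2f_def)?, (algebra | simp))
    show ?thesis by (rule trans[OF s1 s2])
  qed
  have q0: "q 0 = (u^4*a1^2*a3^4 + 4*u^3*a1^2*a3^3*a5 - (2*u^3*a1*a2*a3^4) + u^3*a1*a2*a3^3*b + u^3*a2^3*a3^3 + 6*u^2*a1^2*a3^2*a5^2 - (5*u^2*a1*a2*a3^3*a5) + 3*u^2*a1*a2*a3^2*b*a5 + 2*u^2*a1*a3^5 + u^2*a1*a3^3*b^2 + 3*u^2*a2^3*a3^2*a5 + u^2*a2^2*a3^3*b + 4*u*a1^2*a3*a5^3 - (4*u*a1*a2*a3^2*a5^2) + 3*u*a1*a2*a3*b*a5^2 + 4*u*a1*a3^4*a5 + 2*u*a1*a3^3*b*a5 + 2*u*a1*a3^2*b^2*a5 + 3*u*a2^3*a3*a5^2 + u*a2^2*a3^3*a5 + 2*u*a2^2*a3^2*b*a5 - (2*u*a2*a3^5) - (u*a2*a3^4*b) + a1^2*a5^4 - (a1*a2*a3*a5^3)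 + a1*a2*b*a5^3 + 3*a1*a3^3*a5^2 + 2*a1*a3^2*b*a5^2 + a1*a3*b^2*a5^2 + a2^3*a5^3 + a2^2*a3^2*a5^2 + a2^2*a3*b*a5^2 - (3*a2*a3^4*a5) - (a2*a3^3*b*a5) + a3^6)"
  proof -
    have e: "q 2 * q 0 = - Q1f a1 a2 a3 (p 1) (q 1)" using v1 by (simp add: vieta_def eval_nat_numeral)
    have s1: "q 2 * q 0 = - Q1f a1 a2 a3 (p 1) (q 1)" using e by (simp add: algebra_simps)
    have s2: "- Q1f a1 a2 a3 (p 1) (q 1) = (- a3) * (u^4*a1^2*a3^4 + 4*u^3*a1^2*a3^3*a5 - (2*u^3*a1*a2*a3^4) + u^3*a1*a2*a3^3*b + u^3*a2^3*a3^3 + 6*u^2*a1^2*a3^2*a5^2 - (5*u^2*a1*a2*a3^3*a5) + 3*u^2*a1*a2*a3^2*b*a5 + 2*u^2*a1*a3^5 + u^2*a1*a3^3*b^2 + 3*u^2*a2^3*a3^2*a5 + u^2*a2^2*a3^3*b + 4*u*a1^2*a3*a5^3 - (4*u*a1*a2*a3^2*a5^2) + 3*u*a1*a2*a3*b*a5^2 + 4*u*a1*a3^4*a5 + 2*u*a1*a3^3*b*a5 + 2*u*a1*a3^2*b^2*a5 + 3*u*a2^3*a3*a5^2 + u*a2^2*a3^3*a5 + 2*u*a2^2*a3^2*b*a5 - (2*u*a2*a3^5) - (u*a2*a3^4*b) + a1^2*a5^4 - (a1*a2*a3*a5^3) + a1*a2*b*a5^3 + 3*a1*a3^3*a5^2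 + 2*a1*a3^2*b*a5^2 + a1*a3*b^2*a5^2 + a2^3*a5^3 + a2^2*a3^2*a5^2 + a2^2*a3*b*a5^2 - (3*a2*a3^4*a5) - (a2*a3^3*b*a5) + a3^6)" by ((unfold p1 q1 Q1f_def Q2f_def)?, (algebra | simp))
    have "q 2 * q 0 = q 2 * (u^4*a1^2*a3^4 + 4*u^3*a1^2*a3^3*a5 - (2*u^3*a1*a2*a3^4) + u^3*a1*a2*a3^3*b + u^3*a2^3*a3^3 + 6*u^2*a1^2*a3^2*a5^2 - (5*u^2*a1*a2*a3^3*a5) + 3*u^2*a1*a2*a3^2*b*a5 + 2*u^2*a1*a3^5 + u^2*a1*a3^3*b^2 + 3*u^2*a2^3*a3^2*a5 + u^2*a2^2*a3^3*b + 4*u*a1^2*a3*a5^3 - (4*u*a1*a2*a3^2*a5^2) + 3*u*a1*a2*a3*b*a5^2 + 4*u*a1*a3^4*a5 + 2*u*a1*a3^3*b*a5 + 2*u*a1*a3^2*b^2*a5 + 3*u*a2^3*a3*a5^2 + u*a2^2*a3^3*a5 + 2*u*a2^2*a3^2*b*a5 - (2*u*a2*a3^5) - (u*a2*a3^4*b) + a1^2*a5^4 - (a1*a2*a3*a5^3) + a1*a2*b*a5^3 + 3*a1*a3^3*a5^2 + 2*a1*a3^2*b*a5^2 + a1*a3*b^2*a5^2 + a2^3*a5^3 + a2^2*a3^2*a5^2 + a2^2*a3*b*a5^2 - (3*a2*a3^4*a5) - (a2*a3^3*b*a5) + a3^6)" using trans[OF s1 s2] q2 by simp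
    thus ?thesis using nz by simp
  qed
  have p0: "p 0 = (u^5*a1^2*a3^4 + 4*u^4*a1^2*a3^3*a5 - (2*u^4*a1*a2*a3^4) + 6*u^3*a1^2*a3^2*a5^2 - (5*u^3*a1*a2*a3^3*a5) + 2*u^3*a1*a3^5 + 4*u^2*a1^2*a3*a5^3 - (3*u^2*a1*a2*a3^2*a5^2) + 4*u^2*a1*a3^4*a5 + u^2*a1*a3^3*b*a5 - (2*u^2*a2^2*a3^3*a5) - (2*u^2*a2*a3^5) - (2*u^2*a2*a3^4*b) + u*a1^2*a5^4 + u*a1*a2*a3*a5^3 + 3*u*a1*a3^3*a5^2 + 2*u*a1*a3^2*b*a5^2 - (4*u*a2^2*a3^2*a5^2) - (3*u*a2*a3^4*a5) - (5*u*a2*a3^3*b*a5) + u*a3^6 - (u*a3^4*b^2) + a1*a2*a5^4 + a1*a3^2*a5^3 + a1*a3*b*a5^3 - (2*a2^2*a3*a5^3) - (2*a2*a3^3*a5^2) - (3*a2*a3^2*b*a5^2) - (a3^4*b*a5) - (a3^3*b^2*a5))"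
  proof -
    have e: "p 0 * q 2 + q 0 * p 2 = Q2f a2 b a5 (p 1) (q 1)" using v1 by (simp add: vieta_def eval_nat_numeral)
    have s1: "q 2 * p 0 = Q2f a2 b a5 (p 1) (q 1) - q 0 * p 2" using e by (simp add: algebra_simps)
    have s2: "Q2f a2 b a5 (p 1) (q 1) - q 0 * p 2 = (- a3) * (u^5*a1^2*a3^4 + 4*u^4*a1^2*a3^3*a5 - (2*u^4*a1*a2*a3^4) + 6*u^3*a1^2*a3^2*a5^2 - (5*u^3*a1*a2*a3^3*a5) + 2*u^3*a1*a3^5 + 4*u^2*a1^2*a3*a5^3 - (3*u^2*a1*a2*a3^2*a5^2) + 4*u^2*a1*a3^4*a5 + u^2*a1*a3^3*b*a5 - (2*u^2*a2^2*a3^3*a5) - (2*u^2*a2*a3^5) - (2*u^2*a2*a3^4*b) + u*a1^2*a5^4 + u*a1*a2*a3*a5^3 + 3*u*a1*a3^3*a5^2 + 2*u*a1*a3^2*b*a5^2 - (4*u*a2^2*a3^2*a5^2) - (3*u*a2*a3^4*a5) - (5*u*a2*a3^3*b*a5) + u*a3^6 - (u*a3^4*b^2) + a1*a2*a5^4 + a1*a3^2*a5^3 + a1*a3*b*a5^3 - (2*a2^2*a3*a5^3) - (2*a2*a3^3*a5^2) - (3*a2*a3^2*b*a5^2) - (a3^4*b*a5) - (a3^3*b^2*a5))" by ((unfold p1 q1 q0 p2 Q1f_def Q2f_def)?, (algebra | simp))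
    have "q 2 * p 0 = q 2 * (u^5*a1^2*a3^4 + 4*u^4*a1^2*a3^3*a5 - (2*u^4*a1*a2*a3^4) + 6*u^3*a1^2*a3^2*a5^2 - (5*u^3*a1*a2*a3^3*a5) + 2*u^3*a1*a3^5 + 4*u^2*a1^2*a3*a5^3 - (3*u^2*a1*a2*a3^2*a5^2) + 4*u^2*a1*a3^4*a5 + u^2*a1*a3^3*b*a5 - (2*u^2*a2^2*a3^3*a5) - (2*u^2*a2*a3^5) - (2*u^2*a2*a3^4*b) + u*a1^2*a5^4 + u*a1*a2*a3*a5^3 + 3*u*a1*a3^3*a5^2 + 2*u*a1*a3^2*b*a5^2 - (4*u*a2^2*a3^2*a5^2) - (3*u*a2*a3^4*a5) - (5*u*a2*a3^3*b*a5) + u*a3^6 - (u*a3^4*b^2) + a1*a2*a5^4 + a1*a3^2*a5^3 + a1*a3*b*a5^3 - (2*a2^2*a3*a5^3) - (2*a2*a3^3*a5^2) - (3*a2*a3^2*b*a5^2) - (a3^4*b*a5) - (a3^3*b^2*a5))" using trans[OF s1 s2] q2 by simp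
    thus ?thesis using nz by simp
  qed
  have q7: "q 7 = (u^8*a1^4*a3^2 + 2*u^7*a1^4*a3*a5 + 2*u^7*a1^3*a2*a3^2 + u^6*a1^4*a5^2 + 7*u^6*a1^3*a2*a3*a5 + 4*u^6*a1^3*a3^3 - (2*u^6*a1^2*a2^2*a3^2) + u^6*a1^2*a2^2*a3*b + u^6*a1*a2^4*a3 + 5*u^5*a1^3*a2*a5^2 + 6*u^5*a1^3*a3^2*a5 - (2*u^5*a1^3*a3*b*a5) + 3*u^5*a1^2*a2^2*a3*a5 + u^5*a1^2*a2^2*b*a5 + 6*u^5*a1^2*a2*a3^3 + 2*u^5*a1^2*a2*a3^2*b - (u^5*a1^2*a2*a3*b^2) + u^5*a1*a2^4*a5 - (4*u^5*a1*a2^3*a3^2) + u^5*a2^5*a3 + 5*u^4*a1^3*a3*a5^2 - (2*u^4*a1^3*b*a5^2) + 7*u^4*a1^2*a2^2*a5^2 + 11*u^4*a1^2*a2*a3^2*a5 + 3*u^4*a1^2*a2*a3*b*a5 - (u^4*a1^2*a2*b^2*a5) + 6*u^4*a1^2*a3^4 - (4*u^4*a1*a2^3*a3*a5) + u^4*a1*a2^3*b*a5 - (4*u^4*a1*a2^2*a3^3) + 2*u^4*a1*a2^2*a3^2*b + 2*u^4*a2^5*a5 + u^4*a2^4*a3^2 + 2*u^3*a1^3*a5^3 + 8*u^3*a1^2*a2*a3*a5^2 - (4*u^3*a1^2*a2*b*a5^2) + 6*u^3*a1^2*a3^3*a5 - (4*u^3*a1^2*a3^2*b*a5) - (2*u^3*a1^2*a3*b^2*a5)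 + 3*u^3*a1*a2^3*a5^2 - (2*u^3*a1*a2^2*a3^2*a5) + 10*u^3*a1*a2^2*a3*b*a5 - (3*u^3*a1*a2^2*b^2*a5) + 6*u^3*a1*a2*a3^4 + 4*u^3*a1*a2*a3^3*b - (2*u^3*a1*a2*a3*b^3) + u^3*a2^4*a3*a5 - (3*u^3*a2^4*b*a5) - (4*u^3*a2^3*a3^3) - (4*u^3*a2^3*a3^2*b) - (2*u^3*a2^3*a3*b^2) + 5*u^2*a1^2*a2*a5^3 + 7*u^2*a1^2*a3^2*a5^2 + u^2*a1^2*b^2*a5^2 - (2*u^2*a1*a2^2*a3*a5^2) + 2*u^2*a1*a2^2*b*a5^2 + u^2*a1*a2*a3^3*a5 + 2*u^2*a1*a2*a3^2*b*a5 - (3*u^2*a1*a2*a3*b^2*a5) + u^2*a1*a2*b^3*a5 + 4*u^2*a1*a3^5 + u^2*a1*a3*b^4 + 3*u^2*a2^4*a5^2 + u^2*a2^3*a3*b*a5 + u^2*a2^3*b^2*a5 - (2*u^2*a2^2*a3^4) + u^2*a2^2*a3^3*b + 2*u^2*a2^2*a3^2*b^2 + u^2*a2^2*a3*b^3 + 2*u*a1^2*a3*a5^3 - (2*u*a1^2*b*a5^3) + u*a1*a2^2*a5^3 + 3*u*a1*a2*a3^2*a5^2 + 6*u*a1*a2*a3*b*a5^2 - (2*u*a1*a2*b^2*a5^2) + 2*u*a1*a3^4*a5 - (2*u*a1*a3^3*b*a5) - (2*u*a1*a3^2*b^2*a5) - (2*u*a1*a3*b^3*a5) + u*a2^3*a3*a5^2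 - (2*u*a2^3*b*a5^2) - (5*u*a2^2*a3^3*a5) - (3*u*a2^2*a3^2*b*a5) - (2*u*a2^2*a3*b^2*a5) + 2*u*a2*a3^5 + 2*u*a2*a3^4*b + u*a2*a3^3*b^2 + a1^2*a5^4 - (a1*a2*a3*a5^3) + a1*a2*b*a5^3 + 3*a1*a3^3*a5^2 + 2*a1*a3^2*b*a5^2 + a1*a3*b^2*a5^2 + a2^3*a5^3 + a2^2*a3^2*a5^2 + a2^2*a3*b*a5^2 - (3*a2*a3^4*a5) - (a2*a3^3*b*a5) + a3^6)"
  proof -
    have e: "q 7 * q 5 = - Q1f a1 a2 a3 (p 6) (q 6)" using v6 by (simp add: vieta_def eval_nat_numeral)
    have s1: "q 5 * q 7 = - Q1f a1 a2 a3 (p 6) (q 6)" using e by (simp add: algebra_simps)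
    have s2: "- Q1f a1 a2 a3 (p 6) (q 6) = (- (u^2*a1) - (u*a2) - (a3)) * (u^8*a1^4*a3^2 + 2*u^7*a1^4*a3*a5 + 2*u^7*a1^3*a2*a3^2 + u^6*a1^4*a5^2 + 7*u^6*a1^3*a2*a3*a5 + 4*u^6*a1^3*a3^3 - (2*u^6*a1^2*a2^2*a3^2) + u^6*a1^2*a2^2*a3*b + u^6*a1*a2^4*a3 + 5*u^5*a1^3*a2*a5^2 + 6*u^5*a1^3*a3^2*a5 - (2*u^5*a1^3*a3*b*a5) + 3*u^5*a1^2*a2^2*a3*a5 + u^5*a1^2*a2^2*b*a5 + 6*u^5*a1^2*a2*a3^3 + 2*u^5*a1^2*a2*a3^2*b - (u^5*a1^2*a2*a3*b^2) + u^5*a1*a2^4*a5 - (4*u^5*a1*a2^3*a3^2) + u^5*a2^5*a3 + 5*u^4*a1^3*a3*a5^2 - (2*u^4*a1^3*b*a5^2) + 7*u^4*a1^2*a2^2*a5^2 + 11*u^4*a1^2*a2*a3^2*a5 + 3*u^4*a1^2*a2*a3*b*a5 - (u^4*a1^2*a2*b^2*a5) + 6*u^4*a1^2*a3^4 - (4*u^4*a1*a2^3*a3*a5) + u^4*a1*a2^3*b*a5 - (4*u^4*a1*a2^2*a3^3) + 2*u^4*a1*a2^2*a3^2*b + 2*u^4*a2^5*a5 + u^4*a2^4*a3^2 + 2*u^3*a1^3*a5^3 + 8*u^3*a1^2*a2*a3*a5^2 - (4*u^3*a1^2*a2*b*a5^2) + 6*u^3*a1^2*a3^3*a5 - (4*u^3*a1^2*a3^2*b*a5)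 - (2*u^3*a1^2*a3*b^2*a5) + 3*u^3*a1*a2^3*a5^2 - (2*u^3*a1*a2^2*a3^2*a5) + 10*u^3*a1*a2^2*a3*b*a5 - (3*u^3*a1*a2^2*b^2*a5) + 6*u^3*a1*a2*a3^4 + 4*u^3*a1*a2*a3^3*b - (2*u^3*a1*a2*a3*b^3) + u^3*a2^4*a3*a5 - (3*u^3*a2^4*b*a5) - (4*u^3*a2^3*a3^3) - (4*u^3*a2^3*a3^2*b) - (2*u^3*a2^3*a3*b^2) + 5*u^2*a1^2*a2*a5^3 + 7*u^2*a1^2*a3^2*a5^2 + u^2*a1^2*b^2*a5^2 - (2*u^2*a1*a2^2*a3*a5^2) + 2*u^2*a1*a2^2*b*a5^2 + u^2*a1*a2*a3^3*a5 + 2*u^2*a1*a2*a3^2*b*a5 - (3*u^2*a1*a2*a3*b^2*a5) + u^2*a1*a2*b^3*a5 + 4*u^2*a1*a3^5 + u^2*a1*a3*b^4 + 3*u^2*a2^4*a5^2 + u^2*a2^3*a3*b*a5 + u^2*a2^3*b^2*a5 - (2*u^2*a2^2*a3^4) + u^2*a2^2*a3^3*b + 2*u^2*a2^2*a3^2*b^2 + u^2*a2^2*a3*b^3 + 2*u*a1^2*a3*a5^3 - (2*u*a1^2*b*a5^3) + u*a1*a2^2*a5^3 + 3*u*a1*a2*a3^2*a5^2 + 6*u*a1*a2*a3*b*a5^2 - (2*u*a1*a2*b^2*a5^2) + 2*u*a1*a3^4*a5 - (2*u*a1*a3^3*b*a5) - (2*u*a1*a3^2*b^2*a5) - (2*u*a1*a3*b^3*a5)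 + u*a2^3*a3*a5^2 - (2*u*a2^3*b*a5^2) - (5*u*a2^2*a3^3*a5) - (3*u*a2^2*a3^2*b*a5) - (2*u*a2^2*a3*b^2*a5) + 2*u*a2*a3^5 + 2*u*a2*a3^4*b + u*a2*a3^3*b^2 + a1^2*a5^4 - (a1*a2*a3*a5^3) + a1*a2*b*a5^3 + 3*a1*a3^3*a5^2 + 2*a1*a3^2*b*a5^2 + a1*a3*b^2*a5^2 + a2^3*a5^3 + a2^2*a3^2*a5^2 + a2^2*a3*b*a5^2 - (3*a2*a3^4*a5) - (a2*a3^3*b*a5) + a3^6)" by ((unfold p6 q6 Q1f_def Q2f_def)?, (algebra | simp))
    have "q 5 * q 7 = q 5 * (u^8*a1^4*a3^2 + 2*u^7*a1^4*a3*a5 + 2*u^7*a1^3*a2*a3^2 + u^6*a1^4*a5^2 + 7*u^6*a1^3*a2*a3*a5 + 4*u^6*a1^3*a3^3 - (2*u^6*a1^2*a2^2*a3^2) + u^6*a1^2*a2^2*a3*b + u^6*a1*a2^4*a3 + 5*u^5*a1^3*a2*a5^2 + 6*u^5*a1^3*a3^2*a5 - (2*u^5*a1^3*a3*b*a5) + 3*u^5*a1^2*a2^2*a3*a5 + u^5*a1^2*a2^2*b*a5 + 6*u^5*a1^2*a2*a3^3 + 2*u^5*a1^2*a2*a3^2*b - (u^5*a1^2*a2*a3*b^2) + u^5*a1*a2^4*a5 - (4*u^5*a1*a2^3*a3^2) + u^5*a2^5*a3 + 5*u^4*a1^3*a3*a5^2 - (2*u^4*a1^3*b*a5^2) + 7*u^4*a1^2*a2^2*a5^2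 + 11*u^4*a1^2*a2*a3^2*a5 + 3*u^4*a1^2*a2*a3*b*a5 - (u^4*a1^2*a2*b^2*a5) + 6*u^4*a1^2*a3^4 - (4*u^4*a1*a2^3*a3*a5) + u^4*a1*a2^3*b*a5 - (4*u^4*a1*a2^2*a3^3) + 2*u^4*a1*a2^2*a3^2*b + 2*u^4*a2^5*a5 + u^4*a2^4*a3^2 + 2*u^3*a1^3*a5^3 + 8*u^3*a1^2*a2*a3*a5^2 - (4*u^3*a1^2*a2*b*a5^2) + 6*u^3*a1^2*a3^3*a5 - (4*u^3*a1^2*a3^2*b*a5) - (2*u^3*a1^2*a3*b^2*a5) + 3*u^3*a1*a2^3*a5^2 - (2*u^3*a1*a2^2*a3^2*a5) + 10*u^3*a1*a2^2*a3*b*a5 - (3*u^3*a1*a2^2*b^2*a5) + 6*u^3*a1*a2*a3^4 + 4*u^3*a1*a2*a3^3*b - (2*u^3*a1*a2*a3*b^3) + u^3*a2^4*a3*a5 - (3*u^3*a2^4*b*a5) - (4*u^3*a2^3*a3^3) - (4*u^3*a2^3*a3^2*b) - (2*u^3*a2^3*a3*b^2) + 5*u^2*a1^2*a2*a5^3 + 7*u^2*a1^2*a3^2*a5^2 + u^2*a1^2*b^2*a5^2 - (2*u^2*a1*a2^2*a3*a5^2) + 2*u^2*a1*a2^2*b*a5^2 + u^2*a1*a2*a3^3*a5 + 2*u^2*a1*a2*a3^2*b*a5 - (3*u^2*a1*a2*a3*b^2*a5) + u^2*a1*a2*b^3*a5 + 4*u^2*a1*a3^5 + u^2*a1*a3*b^4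 + 3*u^2*a2^4*a5^2 + u^2*a2^3*a3*b*a5 + u^2*a2^3*b^2*a5 - (2*u^2*a2^2*a3^4) + u^2*a2^2*a3^3*b + 2*u^2*a2^2*a3^2*b^2 + u^2*a2^2*a3*b^3 + 2*u*a1^2*a3*a5^3 - (2*u*a1^2*b*a5^3) + u*a1*a2^2*a5^3 + 3*u*a1*a2*a3^2*a5^2 + 6*u*a1*a2*a3*b*a5^2 - (2*u*a1*a2*b^2*a5^2) + 2*u*a1*a3^4*a5 - (2*u*a1*a3^3*b*a5) - (2*u*a1*a3^2*b^2*a5) - (2*u*a1*a3*b^3*a5) + u*a2^3*a3*a5^2 - (2*u*a2^3*b*a5^2) - (5*u*a2^2*a3^3*a5) - (3*u*a2^2*a3^2*b*a5) - (2*u*a2^2*a3*b^2*a5) + 2*u*a2*a3^5 + 2*u*a2*a3^4*b + u*a2*a3^3*b^2 + a1^2*a5^4 - (a1*a2*a3*a5^3) + a1*a2*b*a5^3 + 3*a1*a3^3*a5^2 + 2*a1*a3^2*b*a5^2 + a1*a3*b^2*a5^2 + a2^3*a5^3 + a2^2*a3^2*a5^2 + a2^2*a3*b*a5^2 - (3*a2*a3^4*a5) - (a2*a3^3*b*a5) + a3^6)" using trans[OF s1 s2] q5 by simp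
    thus ?thesis using nz by simp
  qed
  have p7: "p 7 = (- (2*u^7*a1^3*a3^2*b) - (2*u^7*a1^2*a2^2*a3^2) - (3*u^6*a1^3*a3*b*a5) - (3*u^6*a1^2*a2^2*a3*a5) - (4*u^6*a1^2*a2*a3^2*b) + u^6*a1^2*a2*a3*b^2 - (4*u^6*a1*a2^3*a3^2) + 2*u^6*a1*a2^3*a3*b + u^6*a2^5*a3 + 2*u^5*a1^3*a3*a5^2 - (u^5*a1^3*b*a5^2) - (u^5*a1^2*a2^2*a5^2) - (4*u^5*a1^2*a2*a3^2*a5) - (8*u^5*a1^2*a2*a3*b*a5) + u^5*a1^2*a2*b^2*a5 - (6*u^5*a1^2*a3^3*b) - (u^5*a1^2*a3*b^3) - (8*u^5*a1*a2^3*a3*a5) + 2*u^5*a1*a2^3*b*a5 - (4*u^5*a1*a2^2*a3^3) - (2*u^5*a1*a2^2*a3*b^2) + u^5*a2^5*a5 - (u^5*a2^4*a3*b) + u^4*a1^3*a5^3 + 2*u^4*a1^2*a2*a3*a5^2 - (5*u^4*a1^2*a2*b*a5^2) - (7*u^4*a1^2*a3^2*b*a5) + 3*u^4*a1^2*a3*b^2*a5 - (u^4*a1^2*b^3*a5) - (5*u^4*a1*a2^3*a5^2) - (14*u^4*a1*a2^2*a3^2*a5) + 4*u^4*a1*a2^2*a3*b*a5 - (2*u^4*a1*a2^2*b^2*a5) - (8*u^4*a1*a2*a3^3*b) - (2*u^4*a1*a2*a3^2*b^2) + u^4*a2^4*a3*a5 - (u^4*a2^4*b*a5) - (4*u^4*a2^3*a3^3)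 - (2*u^4*a2^3*a3^2*b) + 4*u^3*a1^2*a2*a5^3 + 4*u^3*a1^2*a3^2*a5^2 - (4*u^3*a1^2*a3*b*a5^2) + 4*u^3*a1^2*b^2*a5^2 - (12*u^3*a1*a2^2*a3*a5^2) + 3*u^3*a1*a2^2*b*a5^2 - (8*u^3*a1*a2*a3^3*a5) - (8*u^3*a1*a2*a3^2*b*a5) - (4*u^3*a1*a2*a3*b^2*a5) - (6*u^3*a1*a3^4*b) - (u^3*a2^4*a5^2) - (4*u^3*a2^3*a3^2*a5) - (4*u^3*a2^3*a3*b*a5) - (2*u^3*a2^2*a3^4) + 2*u^2*a1^2*a3*a5^3 - (5*u^2*a1^2*b*a5^3) - (u^2*a1*a2^2*a5^3) + 8*u^2*a1*a2*a3*b*a5^2 + u^2*a1*a2*b^2*a5^2 - (5*u^2*a1*a3^3*b*a5) + 2*u^2*a1*a3^2*b^2*a5 + u^2*a1*a3*b^3*a5 - (3*u^2*a2^3*a3*a5^2) + u^2*a2^3*b*a5^2 - (11*u^2*a2^2*a3^3*a5) - (8*u^2*a2^2*a3^2*b*a5) + u^2*a2^2*a3*b^2*a5 - (4*u^2*a2*a3^4*b) - (3*u^2*a2*a3^3*b^2) + 2*u*a1^2*a5^4 - (4*u*a1*a2*a3*a5^3) - (2*u*a1*a2*b*a5^3) + 2*u*a1*a3^3*a5^2 - (3*u*a1*a3^2*b*a5^2) - (2*u*a1*a3*b^2*a5^2) - (u*a2^3*a5^3) - (u*a2^2*a3^2*a5^2) + u*a2^2*a3*b*a5^2 - (4*u*a2*a3^4*a5)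 + 3*u*a2*a3^2*b^2*a5 - (2*u*a3^5*b) + u*a3^3*b^3 + a1*a2*a5^4 + a1*a3^2*a5^3 + a1*a3*b*a5^3 - (2*a2^2*a3*a5^3) - (2*a2*a3^3*a5^2) - (3*a2*a3^2*b*a5^2) - (a3^4*b*a5) - (a3^3*b^2*a5))"
  proof -
    have e: "p 5 * q 7 + q 5 * p 7 = Q2f a2 b a5 (p 6) (q 6)" using v6 by (simp add: vieta_def eval_nat_numeral)
    have s1: "q 5 * p 7 = Q2f a2 b a5 (p 6) (q 6) - p 5 * q 7" using e by (simp add: algebra_simps)
    have s2: "Q2f a2 b a5 (p 6) (q 6) - p 5 * q 7 = (- (u^2*a1) - (u*a2) - (a3)) * (- (2*u^7*a1^3*a3^2*b) - (2*u^7*a1^2*a2^2*a3^2) - (3*u^6*a1^3*a3*b*a5) - (3*u^6*a1^2*a2^2*a3*a5) - (4*u^6*a1^2*a2*a3^2*b) + u^6*a1^2*a2*a3*b^2 - (4*u^6*a1*a2^3*a3^2) + 2*u^6*a1*a2^3*a3*b + u^6*a2^5*a3 + 2*u^5*a1^3*a3*a5^2 - (u^5*a1^3*b*a5^2) - (u^5*a1^2*a2^2*a5^2) - (4*u^5*a1^2*a2*a3^2*a5) - (8*u^5*a1^2*a2*a3*b*a5) + u^5*a1^2*a2*b^2*a5 - (6*u^5*a1^2*a3^3*b) - (u^5*a1^2*a3*b^3) - (8*u^5*a1*a2^3*a3*a5) + 2*u^5*a1*a2^3*b*a5 - (4*u^5*a1*a2^2*a3^3) - (2*u^5*a1*a2^2*a3*b^2)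 + u^5*a2^5*a5 - (u^5*a2^4*a3*b) + u^4*a1^3*a5^3 + 2*u^4*a1^2*a2*a3*a5^2 - (5*u^4*a1^2*a2*b*a5^2) - (7*u^4*a1^2*a3^2*b*a5) + 3*u^4*a1^2*a3*b^2*a5 - (u^4*a1^2*b^3*a5) - (5*u^4*a1*a2^3*a5^2) - (14*u^4*a1*a2^2*a3^2*a5) + 4*u^4*a1*a2^2*a3*b*a5 - (2*u^4*a1*a2^2*b^2*a5) - (8*u^4*a1*a2*a3^3*b) - (2*u^4*a1*a2*a3^2*b^2) + u^4*a2^4*a3*a5 - (u^4*a2^4*b*a5) - (4*u^4*a2^3*a3^3) - (2*u^4*a2^3*a3^2*b) + 4*u^3*a1^2*a2*a5^3 + 4*u^3*a1^2*a3^2*a5^2 - (4*u^3*a1^2*a3*b*a5^2) + 4*u^3*a1^2*b^2*a5^2 - (12*u^3*a1*a2^2*a3*a5^2) + 3*u^3*a1*a2^2*b*a5^2 - (8*u^3*a1*a2*a3^3*a5) - (8*u^3*a1*a2*a3^2*b*a5) - (4*u^3*a1*a2*a3*b^2*a5) - (6*u^3*a1*a3^4*b) - (u^3*a2^4*a5^2) - (4*u^3*a2^3*a3^2*a5) - (4*u^3*a2^3*a3*b*a5) - (2*u^3*a2^2*a3^4) + 2*u^2*a1^2*a3*a5^3 - (5*u^2*a1^2*b*a5^3) - (u^2*a1*a2^2*a5^3) + 8*u^2*a1*a2*a3*b*a5^2 + u^2*a1*a2*b^2*a5^2 - (5*u^2*a1*a3^3*b*a5) + 2*u^2*a1*a3^2*b^2*a5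 + u^2*a1*a3*b^3*a5 - (3*u^2*a2^3*a3*a5^2) + u^2*a2^3*b*a5^2 - (11*u^2*a2^2*a3^3*a5) - (8*u^2*a2^2*a3^2*b*a5) + u^2*a2^2*a3*b^2*a5 - (4*u^2*a2*a3^4*b) - (3*u^2*a2*a3^3*b^2) + 2*u*a1^2*a5^4 - (4*u*a1*a2*a3*a5^3) - (2*u*a1*a2*b*a5^3) + 2*u*a1*a3^3*a5^2 - (3*u*a1*a3^2*b*a5^2) - (2*u*a1*a3*b^2*a5^2) - (u*a2^3*a5^3) - (u*a2^2*a3^2*a5^2) + u*a2^2*a3*b*a5^2 - (4*u*a2*a3^4*a5) + 3*u*a2*a3^2*b^2*a5 - (2*u*a3^5*b) + u*a3^3*b^3 + a1*a2*a5^4 + a1*a3^2*a5^3 + a1*a3*b*a5^3 - (2*a2^2*a3*a5^3) - (2*a2*a3^3*a5^2) - (3*a2*a3^2*b*a5^2) - (a3^4*b*a5) - (a3^3*b^2*a5))" by ((unfold p6 q6 p5 q7 Q1f_def Q2f_def)?, (algebra | simp))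
    have "q 5 * p 7 = q 5 * (- (2*u^7*a1^3*a3^2*b) - (2*u^7*a1^2*a2^2*a3^2) - (3*u^6*a1^3*a3*b*a5) - (3*u^6*a1^2*a2^2*a3*a5) - (4*u^6*a1^2*a2*a3^2*b) + u^6*a1^2*a2*a3*b^2 - (4*u^6*a1*a2^3*a3^2) + 2*u^6*a1*a2^3*a3*b + u^6*a2^5*a3 + 2*u^5*a1^3*a3*a5^2 - (u^5*a1^3*b*a5^2) - (u^5*a1^2*a2^2*a5^2) - (4*u^5*a1^2*a2*a3^2*a5) - (8*u^5*a1^2*a2*a3*b*a5) + u^5*a1^2*a2*b^2*a5 - (6*u^5*a1^2*a3^3*b) - (u^5*a1^2*a3*b^3) - (8*u^5*a1*a2^3*a3*a5) + 2*u^5*a1*a2^3*b*a5 - (4*u^5*a1*a2^2*a3^3) - (2*u^5*a1*a2^2*a3*b^2) + u^5*a2^5*a5 - (u^5*a2^4*a3*b) + u^4*a1^3*a5^3 + 2*u^4*a1^2*a2*a3*a5^2 - (5*u^4*a1^2*a2*b*a5^2) - (7*u^4*a1^2*a3^2*b*a5) + 3*u^4*a1^2*a3*b^2*a5 - (u^4*a1^2*b^3*a5) - (5*u^4*a1*a2^3*a5^2) - (14*u^4*a1*a2^2*a3^2*a5) + 4*u^4*a1*a2^2*a3*b*a5 - (2*u^4*a1*a2^2*b^2*a5) - (8*u^4*a1*a2*a3^3*b) - (2*u^4*a1*a2*a3^2*b^2) + u^4*a2^4*a3*a5 - (u^4*a2^4*b*a5) - (4*u^4*a2^3*a3^3) -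 (2*u^4*a2^3*a3^2*b) + 4*u^3*a1^2*a2*a5^3 + 4*u^3*a1^2*a3^2*a5^2 - (4*u^3*a1^2*a3*b*a5^2) + 4*u^3*a1^2*b^2*a5^2 - (12*u^3*a1*a2^2*a3*a5^2) + 3*u^3*a1*a2^2*b*a5^2 - (8*u^3*a1*a2*a3^3*a5) - (8*u^3*a1*a2*a3^2*b*a5) - (4*u^3*a1*a2*a3*b^2*a5) - (6*u^3*a1*a3^4*b) - (u^3*a2^4*a5^2) - (4*u^3*a2^3*a3^2*a5) - (4*u^3*a2^3*a3*b*a5) - (2*u^3*a2^2*a3^4) + 2*u^2*a1^2*a3*a5^3 - (5*u^2*a1^2*b*a5^3) - (u^2*a1*a2^2*a5^3) + 8*u^2*a1*a2*a3*b*a5^2 + u^2*a1*a2*b^2*a5^2 - (5*u^2*a1*a3^3*b*a5) + 2*u^2*a1*a3^2*b^2*a5 + u^2*a1*a3*b^3*a5 - (3*u^2*a2^3*a3*a5^2) + u^2*a2^3*b*a5^2 - (11*u^2*a2^2*a3^3*a5) - (8*u^2*a2^2*a3^2*b*a5) + u^2*a2^2*a3*b^2*a5 - (4*u^2*a2*a3^4*b) - (3*u^2*a2*a3^3*b^2) + 2*u*a1^2*a5^4 - (4*u*a1*a2*a3*a5^3) - (2*u*a1*a2*b*a5^3) + 2*u*a1*a3^3*a5^2 - (3*u*a1*a3^2*b*a5^2) - (2*u*a1*a3*b^2*a5^2) - (u*a2^3*a5^3) - (u*a2^2*a3^2*a5^2) + u*a2^2*a3*b*a5^2 - (4*u*a2*a3^4*a5)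 + 3*u*a2*a3^2*b^2*a5 - (2*u*a3^5*b) + u*a3^3*b^3 + a1*a2*a5^4 + a1*a3^2*a5^3 + a1*a3*b*a5^3 - (2*a2^2*a3*a5^3) - (2*a2*a3^3*a5^2) - (3*a2*a3^2*b*a5^2) - (a3^4*b*a5) - (a3^3*b^2*a5))" using trans[OF s1 s2] q5 by simp
    thus ?thesis using nz by simp
  qed
  show ?thesis unfolding Sf_def CAf_def CBf_def CCf_def alf_def bef_def gaf_def
    unfolding p0 p1 p2 h3 h4 p5 p6 p7 q0 q1 q2 q5 q6 q7 a6 by algebra
qed

lemma vt:
  fixes t g0 g1 g2 P0 Q0 P1 Q1 P2 Q2 p0 q0 p1 q1 p2 q2 :: real
  assumes h: "q2*q0 = - Q1f a1 a2 a3 p1 q1" "p0*q2 + q0*p2 = Q2f a2 b a5 p1 q1"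
      "p2*p0 = - Q3f a3 a5 a6 p1 q1"
    and s: "p0 = g0*(P0 + t*Q0)" "q0 = g0*Q0" "p1 = g1*(P1 + t*Q1)" "q1 = g1*Q1"
      "p2 = g2*(P2 + t*Q2)" "q2 = g2*Q2"
    and g: "g2*g0 = g1^2" "g1 \<noteq> 0"
  shows "Q2*Q0 = - Q1f a1 (a2+2*t*a1) (a1*t^2+a2*t+a3) P1 Q1"
    "P0*Q2 + Q0*P2 = Q2f (a2+2*t*a1) (b - 4*t*a2 - 4*t^2*a1)
                       (2*a1*t^3+3*a2*t^2+(2*a3-b)*t+a5) P1 Q1"
    "P2*P0 = - Q3f (a1*t^2+a2*t+a3) (2*a1*t^3+3*a2*t^2+(2*a3-b)*t+a5)
                       (a1*t^4+2*a2*t^3+(2*a3-b)*t^2+2*a5*t+a6) P1 Q1"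
proof -
  have "g1^2 * (Q2*Q0 - (- Q1f a1 (a2+2*t*a1) (a1*t^2+a2*t+a3) P1 Q1)) = 0"
    using h(1) g(1) unfolding s Q1f_def by algebra
  thus "Q2*Q0 = - Q1f a1 (a2+2*t*a1) (a1*t^2+a2*t+a3) P1 Q1" using g(2) by simp
  have "g1^2 * ((P0*Q2 + Q0*P2) - Q2f (a2+2*t*a1) (b - 4*t*a2 - 4*t^2*a1)
                       (2*a1*t^3+3*a2*t^2+(2*a3-b)*t+a5) P1 Q1) = 0"
    using h(1,2) g(1) unfolding s Q1f_def Q2f_def by algebra
  thus "P0*Q2 + Q0*P2 = Q2f (a2+2*t*a1) (b - 4*t*a2 - 4*t^2*a1)
                       (2*a1*t^3+3*a2*t^2+(2*a3-b)*t+a5) P1 Q1" using g(2) by simp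
  have "g1^2 * (P2*P0 - (- Q3f (a1*t^2+a2*t+a3) (2*a1*t^3+3*a2*t^2+(2*a3-b)*t+a5)
                       (a1*t^4+2*a2*t^3+(2*a3-b)*t^2+2*a5*t+a6) P1 Q1)) = 0"
    using h g(1) unfolding s Q1f_def Q2f_def Q3f_def by algebra
  thus "P2*P0 = - Q3f (a1*t^2+a2*t+a3) (2*a1*t^3+3*a2*t^2+(2*a3-b)*t+a5)
                       (a1*t^4+2*a2*t^3+(2*a3-b)*t^2+2*a5*t+a6) P1 Q1" using g(2) by simp
qed

lemma inv_abg:
  fixes t :: real
  shows "alf a1 (a2+2*t*a1) (a1*t^2+a2*t+a3) (b - 4*t*a2 - 4*t^2*a1)
            (2*a1*t^3+3*a2*t^2+(2*a3-b)*t+a5) (a1*t^4+2*a2*t^3+(2*a3-b)*t^2+2*a5*t+a6)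
         = alf a1 a2 a3 b a5 a6"
    "bef a1 (a2+2*t*a1) (a1*t^2+a2*t+a3) (b - 4*t*a2 - 4*t^2*a1)
            (2*a1*t^3+3*a2*t^2+(2*a3-b)*t+a5) (a1*t^4+2*a2*t^3+(2*a3-b)*t^2+2*a5*t+a6)
         = bef a1 a2 a3 b a5 a6"
    "gaf a1 (a2+2*t*a1) (a1*t^2+a2*t+a3) (b - 4*t*a2 - 4*t^2*a1)
            (2*a1*t^3+3*a2*t^2+(2*a3-b)*t+a5) (a1*t^4+2*a2*t^3+(2*a3-b)*t^2+2*a5*t+a6)
         = gaf a1 a2 a3 b a5 a6"
  unfolding alf_def bef_def gaf_def by algebra+

lemma GL:
  fixes p q :: "nat \<Rightarrow> real" and a1 a2 a3 b a5 a6 :: real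
  assumes V: "\<And>k. 1 \<le> k \<Longrightarrow> k \<le> 6 \<Longrightarrow> vieta a1 a2 a3 b a5 a6 p q k"
    and nz: "\<And>k. k \<le> 7 \<Longrightarrow> q k \<noteq> 0"
  shows "Sf (CAf (alf a1 a2 a3 b a5 a6) (bef a1 a2 a3 b a5 a6) (gaf a1 a2 a3 b a5 a6))
            (CBf (alf a1 a2 a3 b a5 a6) (bef a1 a2 a3 b a5 a6) (gaf a1 a2 a3 b a5 a6))
            (CCf (alf a1 a2 a3 b a5 a6) (bef a1 a2 a3 b a5 a6) (gaf a1 a2 a3 b a5 a6)) p p = 0
       \<and> Sf (CAf (alf a1 a2 a3 b a5 a6) (bef a1 a2 a3 b a5 a6) (gaf a1 a2 a3 b a5 a6))
            (CBf (alf a1 a2 a3 b a5 a6) (bef a1 a2 a3 b a5 a6) (gaf a1 a2 a3 b a5 a6))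
            (CCf (alf a1 a2 a3 b a5 a6) (bef a1 a2 a3 b a5 a6) (gaf a1 a2 a3 b a5 a6)) q q = 0"
proof -
  define t where "t = p 3 / q 3"
  define mu where "mu = q 4 / q 3"
  define g where "g k = q 3 * mu ^ k / mu ^ 3" for k
  define P where "P k = (p k - t * q k) / g k" for k
  define Q where "Q k = q k / g k" for k
  have q3: "q 3 \<noteq> 0" and q4: "q 4 \<noteq> 0" using nz by auto
  have mu: "mu \<noteq> 0" unfolding mu_def using q3 q4 by simp
  have gnz: "g k \<noteq> 0" for k unfolding g_def using q3 mu by simp
  have g3: "g 3 = q 3" unfolding g_def using mu by simp
  have g4: "g 4 = q 4" unfolding g_def mu_def using q3 by (simp add: power_Suc numeral_eq_Suc field_simps)
  have gg: "g (Suc (Suc j)) * g j = (g (Suc j))^2" for j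
    unfolding g_def using mu by (simp add: field_simps power2_eq_square)
  have pP: "p k = g k * (P k + t * Q k)" for k unfolding P_def Q_def using gnz[of k] by (simp add: field_simps)
  have qQ: "q k = g k * Q k" for k unfolding Q_def using gnz[of k] by simp
  define a2' where "a2' = a2+2*t*a1"
  define a3' where "a3' = a1*t^2+a2*t+a3"
  define b' where "b' = b - 4*t*a2 - 4*t^2*a1"
  define a5' where "a5' = 2*a1*t^3+3*a2*t^2+(2*a3-b)*t+a5"
  define a6' where "a6' = a1*t^4+2*a2*t^3+(2*a3-b)*t^2+2*a5*t+a6"
  have V': "vieta a1 a2' a3' b' a5' a6' P Q k" if k: "1 \<le> k" "k \<le> 6" for k
  proof -
    obtain j where j: "k = Suc j" using k by (cases k) auto
    have vk: "vieta a1 a2 a3 b a5 a6 p q (Suc j)" using V k j by simp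
    have gj: "g (Suc (Suc j)) * g j = (g (Suc j))^2" by (rule gg)
    note r = vt[OF vk[unfolded vieta_def, simplified, THEN conjunct1]
                  vk[unfolded vieta_def, simplified, THEN conjunct2, THEN conjunct1]
                  vk[unfolded vieta_def, simplified, THEN conjunct2, THEN conjunct2]
                  pP qQ pP qQ pP qQ gj gnz]
    show ?thesis unfolding vieta_def j a2'_def a3'_def b'_def a5'_def a6'_def using r by simp
  qed
  have P3: "P 3 = 0" unfolding P_def t_def using q3 by simp
  have Q3: "Q 3 = 1" unfolding Q_def g3 using q3 by simp
  have Q4: "Q 4 = 1" unfolding Q_def g4 using q4 by simp
  have Qnz: "Q 2 \<noteq> 0" "Q 5 \<noteq> 0" unfolding Q_def using nz gnz by auto
  note N = NL[OF P3 Q3 refl Q4 V' Qnz]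
  define kA where "kA = CAf (alf a1 a2 a3 b a5 a6) (bef a1 a2 a3 b a5 a6) (gaf a1 a2 a3 b a5 a6)"
  define kB where "kB = CBf (alf a1 a2 a3 b a5 a6) (bef a1 a2 a3 b a5 a6) (gaf a1 a2 a3 b a5 a6)"
  define kC where "kC = CCf (alf a1 a2 a3 b a5 a6) (bef a1 a2 a3 b a5 a6) (gaf a1 a2 a3 b a5 a6)"
  have N': "Sf kA kB kC P P = 0" "Sf kA kB kC P Q = 0" "Sf kA kB kC Q Q = 0"
    using N unfolding a2'_def a3'_def b'_def a5'_def a6'_def inv_abg kA_def kB_def kC_def by auto
  define G where "G = q 3 * q 4"
  have G: "g 7 * g 0 = G" "g 6 * g 1 = G" "g 5 * g 2 = G" "g 4 * g 3 = G"
    unfolding G_def g_def mu_def using q3 by (simp_all add: field_simps power_Suc numeral_eq_Suc)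
  have e7: "g 7 * X * (g 0 * Y) = G * (X*Y)" for X Y
    using G(1) by (simp add: G(1)[symmetric] ac_simps)
  have e6: "g 6 * X * (g 1 * Y) = G * (X*Y)" for X Y
    using G(2) by (simp add: G(2)[symmetric] ac_simps)
  have e5: "g 5 * X * (g 2 * Y) = G * (X*Y)" for X Y
    using G(3) by (simp add: G(3)[symmetric] ac_simps)
  have e4: "g 4 * X * (g 3 * Y) = G * (X*Y)" for X Y
    using G(4) by (simp add: G(4)[symmetric] ac_simps)
  have "Sf kA kB kC p p = G * (Sf kA kB kC P P + 2*t*Sf kA kB kC P Q + t^2 * Sf kA kB kC Q Q)"
    unfolding Sf_def pP qQ e7 e6 e5 e4 by (simp add: algebra_simps power2_eq_square)
  moreover have "Sf kA kB kC q q = G * Sf kA kB kC Q Q"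
    unfolding Sf_def qQ e7 e6 e5 e4 by (simp add: algebra_simps)
  ultimately show ?thesis using N' unfolding kA_def kB_def kC_def by simp
qed

theorem corollary3:
  fixes A B :: "real^3^3" and p q :: "nat \<Rightarrow> real" and J :: real
  assumes symA: "transpose A = A" and symB: "transpose B = B"
    and q_nz: "\<forall>n. q n \<noteq> 0"
    and D_nz: "\<forall>n. bq B (p n) (q n) (p (n+1)) (q (n+1)) \<noteq> 0"
    and rec_p: "\<forall>n. p (n+2) =
        (q n * Fq A B (p (n+1)) (q (n+1)) $ 1 - p n * Fq A B (p (n+1)) (q (n+1)) $ 2)
        / bq B (p n) (q n) (p (n+1)) (q (n+1))"
    and rec_q: "\<forall>n. q (n+2) =
        (q n * Fq A B (p (n+1)) (q (n+1)) $ 2 - p n * Fq A B (p (n+1)) (q (n+1)) $ 3)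
        / bq B (p n) (q n) (p (n+1)) (q (n+1))"
    and J_def: "J = bq A (p 0) (q 0) (p 1) (q 1) / bq B (p 0) (q 0) (p 1) (q 1)"
  shows "(\<forall>n. p (n+7) * p n = cA A B J * p (n+6) * p (n+1) + cB A B J * p (n+5) * p (n+2)
                              + cC A B J * p (n+4) * p (n+3)) \<and>
         (\<forall>n. q (n+7) * q n = cA A B J * q (n+6) * q (n+1) + cB A B J * q (n+5) * q (n+2)
                              + cC A B J * q (n+4) * q (n+3))"
  proof -
  define a1 where "a1 = qa1 A B J"
  define a2 where "a2 = qa2 A B J"
  define a3 where "a3 = qa3 A B J"
  define b where "b = qI A B J"
  define a5 where "a5 = qa5 A B J"
  define a6 where "a6 = qa6 A B J"
  have sA: "A$i$j = A$j$i" for i j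
  proof -
    have "(transpose A)$i$j = A$i$j" using symA by simp
    thus ?thesis by (simp add: transpose_def)
  qed
  have sB: "B$i$j = B$j$i" for i j
  proof -
    have "(transpose B)$i$j = B$i$j" using symB by simp
    thus ?thesis by (simp add: transpose_def)
  qed
  have sym: "A$2$1 = A$1$2" "A$3$1 = A$1$3" "A$3$2 = A$2$3"
            "B$2$1 = B$1$2" "B$3$1 = B$1$3" "B$3$2 = B$2$3" using sA sB by auto
  define E where "E n \<longleftrightarrow> bq A (p n) (q n) (p (n+1)) (q (n+1)) = J * bq B (p n) (q n) (p (n+1)) (q (n+1))" for n
  have step: "vieta a1 a2 a3 b a5 a6 p q (n+1) \<and> E (n+1)" if En: "E n" for n
  proof -
    define x where "x = p n"
    define y where "y = q n"
    define x1 where "x1 = p (n+1)"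
    define y1 where "y1 = q (n+1)"
    define x2 where "x2 = p (n+2)"
    define y2 where "y2 = q (n+2)"
    define D where "D = bq B x y x1 y1"
    have y1nz: "y1 \<noteq> 0" using q_nz unfolding y1_def by simp
    have Dnz: "D \<noteq> 0" using D_nz unfolding D_def x_def y_def x1_def y1_def by simp
    have rp: "p (n+2) = (q n * Fq A B (p (n+1)) (q (n+1)) $ 1 - p n * Fq A B (p (n+1)) (q (n+1)) $ 2)
        / bq B (p n) (q n) (p (n+1)) (q (n+1))" using rec_p by blast
    have rq: "q (n+2) = (q n * Fq A B (p (n+1)) (q (n+1)) $ 2 - p n * Fq A B (p (n+1)) (q (n+1)) $ 3)
        / bq B (p n) (q n) (p (n+1)) (q (n+1))" using rec_q by blast
    have hD: "D = x^2*(B$1$1*x1^2 + B$1$2*(x1*y1) + B$1$3*y1^2)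
                + (x*y)*(B$2$1*x1^2 + B$2$2*(x1*y1) + B$2$3*y1^2)
                + y^2*(B$3$1*x1^2 + B$3$2*(x1*y1) + B$3$3*y1^2)"
      unfolding D_def bq_exp ..
    have hE: "x^2*(A$1$1*x1^2 + A$1$2*(x1*y1) + A$1$3*y1^2)
                + (x*y)*(A$2$1*x1^2 + A$2$2*(x1*y1) + A$2$3*y1^2)
                + y^2*(A$3$1*x1^2 + A$3$2*(x1*y1) + A$3$3*y1^2) = J*D"
      using En unfolding E_def D_def x_def y_def x1_def y1_def bq_exp by simp
    have hP: "x2 = (y*((A$2$1*x1^2 + A$2$2*(x1*y1) + A$2$3*y1^2) * (B$3$1*x1^2 + B$3$2*(x1*y1) + B$3$3*y1^2)
                   - (A$3$1*x1^2 + A$3$2*(x1*y1) + A$3$3*y1^2) * (B$2$1*x1^2 + B$2$2*(x1*y1) + B$2$3*y1^2))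
                - x*((A$3$1*x1^2 + A$3$2*(x1*y1) + A$3$3*y1^2) * (B$1$1*x1^2 + B$1$2*(x1*y1) + B$1$3*y1^2)
                   - (A$1$1*x1^2 + A$1$2*(x1*y1) + A$1$3*y1^2) * (B$3$1*x1^2 + B$3$2*(x1*y1) + B$3$3*y1^2)))/D"
      unfolding x2_def D_def x_def y_def x1_def y1_def
      by (rule rp[unfolded Fq_exp[OF y1nz[unfolded y1_def]]])
    have hQ: "y2 = (y*((A$3$1*x1^2 + A$3$2*(x1*y1) + A$3$3*y1^2) * (B$1$1*x1^2 + B$1$2*(x1*y1) + B$1$3*y1^2)
                   - (A$1$1*x1^2 + A$1$2*(x1*y1) + A$1$3*y1^2) * (B$3$1*x1^2 + B$3$2*(x1*y1) + B$3$3*y1^2))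
                - x*((A$1$1*x1^2 + A$1$2*(x1*y1) + A$1$3*y1^2) * (B$2$1*x1^2 + B$2$2*(x1*y1) + B$2$3*y1^2)
                   - (A$2$1*x1^2 + A$2$2*(x1*y1) + A$2$3*y1^2) * (B$1$1*x1^2 + B$1$2*(x1*y1) + B$1$3*y1^2)))/D"
      unfolding y2_def D_def x_def y_def x1_def y1_def
      by (rule rq[unfolded Fq_exp[OF y1nz[unfolded y1_def]]])
    note c = core[OF hD hE Dnz hP hQ]
    have v1: "y2 * y = - Q1f a1 a2 a3 x1 y1"
      using c(1) unfolding Q1f_def a1_def a2_def a3_def qa1_def qa2_def qa3_def
      by (simp add: algebra_simps power2_eq_square)
    have v2: "x * y2 + y * x2 = Q2f a2 b a5 x1 y1"
      using c(2) unfolding Q2f_def a2_def b_def a5_def qa2_def qI_def qa5_def sym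
      by (simp add: algebra_simps power2_eq_square)
    have v3: "x2 * x = - Q3f a3 a5 a6 x1 y1"
      using c(3) unfolding Q3f_def a3_def a5_def a6_def qa3_def qa5_def qa6_def sym
      by (simp add: algebra_simps power2_eq_square)
    have V: "vieta a1 a2 a3 b a5 a6 p q (n+1)"
      using v1 v2 v3 unfolding vieta_def x_def y_def x1_def y1_def x2_def y2_def
      by (simp add: mult.commute)
    have "bq A x1 y1 x2 y2 - J * bq B x1 y1 x2 y2
          = x2^2 * Q1f a1 a2 a3 x1 y1 + (x2*y2) * Q2f a2 b a5 x1 y1 + y2^2 * Q3f a3 a5 a6 x1 y1"
      unfolding bq_exp Q1f_def Q2f_def Q3f_def a1_def a2_def a3_def b_def a5_def a6_def
        qa1_def qa2_def qa3_def qI_def qa5_def qa6_def sym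
      by (simp add: algebra_simps power2_eq_square)
    also have "... = 0"
    proof -
      have w1: "Q1f a1 a2 a3 x1 y1 = -(y2*y)" using v1 by simp
      have w3: "Q3f a3 a5 a6 x1 y1 = -(x2*x)" using v3 by simp
      show ?thesis unfolding w1 w3 v2[symmetric] by (simp add: algebra_simps power2_eq_square)
    qed
    finally have "E (n+1)" unfolding E_def x1_def y1_def x2_def y2_def
      by (simp add: add.assoc)
    with V show ?thesis by simp
  qed
  have E0: "E 0"
    using D_nz[rule_format, of 0] unfolding E_def J_def by simp
  have Eall: "E n" for n
  proof (induction n)
    case 0 then show ?case using E0 .
  next
    case (Suc n) then show ?case using step[of n] by simp
  qed
  have Vall: "vieta a1 a2 a3 b a5 a6 p q m" if "1 \<le> m" for m
  proof -
    have "vieta a1 a2 a3 b a5 a6 p q (m - 1 + 1)" using step[OF Eall[of "m-1"]] by simp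
    thus ?thesis using that by (simp add: le_add_diff_inverse2)
  qed
  have cAe: "cA A B J = CAf (alf a1 a2 a3 b a5 a6) (bef a1 a2 a3 b a5 a6) (gaf a1 a2 a3 b a5 a6)"
    and cBe: "cB A B J = CBf (alf a1 a2 a3 b a5 a6) (bef a1 a2 a3 b a5 a6) (gaf a1 a2 a3 b a5 a6)"
    and cCe: "cC A B J = CCf (alf a1 a2 a3 b a5 a6) (bef a1 a2 a3 b a5 a6) (gaf a1 a2 a3 b a5 a6)"
    unfolding cA_def cB_def cC_def CAf_def CBf_def CCf_def alf_def bef_def gaf_def
      qalpha_def qbeta_def qgamma_def a1_def a2_def a3_def b_def a5_def a6_def by simp_all
  have W: "Sf (cA A B J) (cB A B J) (cC A B J) (\<lambda>k. p (n+k)) (\<lambda>k. p (n+k)) = 0 \<and>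
           Sf (cA A B J) (cB A B J) (cC A B J) (\<lambda>k. q (n+k)) (\<lambda>k. q (n+k)) = 0" for n
  proof -
    have V': "vieta a1 a2 a3 b a5 a6 (\<lambda>k. p (n+k)) (\<lambda>k. q (n+k)) k" if "1 \<le> k" "k \<le> 6" for k
    proof -
      have h: "vieta a1 a2 a3 b a5 a6 p q (n+k)" using Vall that by simp
      have e1: "n + k - 1 = n + (k - 1)" "n + k + 1 = n + (k+1)" using that by auto
      show ?thesis using h unfolding vieta_def e1 by simp
    qed
    have nz': "q (n+k) \<noteq> 0" for k using q_nz by simp
    show ?thesis using GL[OF V' nz'] unfolding cAe cBe cCe by simp
  qed
  show ?thesis
  proof (intro conjI allI)
    fix n
    have h: "Sf (cA A B J) (cB A B J) (cC A B J) (\<lambda>k. p (n+k)) (\<lambda>k. p (n+k)) = 0" using W by blast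
    thus "p (n+7) * p n = cA A B J * p (n+6) * p (n+1) + cB A B J * p (n+5) * p (n+2)
                              + cC A B J * p (n+4) * p (n+3)"
      unfolding Sf_def by (simp add: algebra_simps)
  next
    fix n
    have h: "Sf (cA A B J) (cB A B J) (cC A B J) (\<lambda>k. q (n+k)) (\<lambda>k. q (n+k)) = 0" using W by blast
    thus "q (n+7) * q n = cA A B J * q (n+6) * q (n+1) + cB A B J * q (n+5) * q (n+2)
                              + cC A B J * q (n+4) * q (n+3)"
      unfolding Sf_def by (simp add: algebra_simps)
  qed
qed

end
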